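(* Let $G_1$ be the planar symmetry group of a periodic isonemal prefabric, and suppose $G_1$ is of crystallographic type $pgg$ or $pmg$, with its reflection and glide-reflection axes at $45^\circ$ to the strand directions. Consider a rectangular lattice unit of $G_1$ whose corners are centres of half-turn symmetries; the nine points consisting of its four corners, the four midpoints of its sides, and its centre are all centres of half-turns (with or without side reversal). Then either all nine of these half-turn centres lie at cell corners or cell centres, or all nine lie on cell boundaries but not at cell corners.
   Context: A prefabric consists of two perpendicular layers of parallel strands of unit width: warps (vertical) and wefts (horizontal). The plane is divided into unit square cells, each cell being where one warp crosses one weft. Each cell is coloured dark if the warp is on top as seen from the front, and pale if the weft is on top. A symmetry is an isometry of the plane that maps strands to strands and preserves which strand lies on top at each crossing. Such an isometry may need to be combined with the reversal $\tau$ of the two sides of the prefabric; if so it is called side-reversing, and otherwise side-preserving. The prefabric is isonemal if its symmetry group acts transitively on the set of strands. $G_1$ denotes the group of planar isometries underlying the symmetries. A half-turn centre of such a symmetry necessarily lies at a cell corner, at a cell centre, or at the midpoint of a cell edge. *)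

theory Defs
  imports "HOL-Analysis.Analysis"
begin

type_synonym pt = "real \<times> real"

datatype strand = Warp int | Weft int

fun strand_set :: "strand \<Rightarrow> pt set" where
  "strand_set (Warp i) = {p. of_int i \<le> fst p \<and> fst p \<le> of_int i + 1}"
| "strand_set (Weft j) = {p. of_int j \<le> snd p \<and> snd p \<le> of_int j + 1}"

definition cell :: "int \<Rightarrow> int \<Rightarrow> pt set" where
  "cell i j = strand_set (Warp i) \<inter> strand_set (Weft j)"

text \<open>A prefabric is given by its colouring: D i j = True iff cell (i,j) is dark,
  i.e. the warp i lies on top there (seen from the front); otherwise the weft j is on top.\<close>

definition top_strand :: "(int \<Rightarrow> int \<Rightarrow> bool) \<Rightarrow> int \<Rightarrow> int \<Rightarrow> strand" where
  "top_strand D i j = (if D i j then Warp i else Weft j)"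

definition bottom_strand :: "(int \<Rightarrow> int \<Rightarrow> bool) \<Rightarrow> int \<Rightarrow> int \<Rightarrow> strand" where
  "bottom_strand D i j = (if D i j then Weft j else Warp i)"

definition isometry :: "(pt \<Rightarrow> pt) \<Rightarrow> bool" where
  "isometry f \<longleftrightarrow> (\<forall>p q. dist (f p) (f q) = dist p q)"

text \<open>f is a symmetry of the prefabric D, side-reversing iff rv (i.e. combined with \<tau>).\<close>
definition is_sym :: "(int \<Rightarrow> int \<Rightarrow> bool) \<Rightarrow> (pt \<Rightarrow> pt) \<Rightarrow> bool \<Rightarrow> bool" where
  "is_sym D f rv \<longleftrightarrow> isometry f \<and>
     (\<forall>s. \<exists>s'. f ` strand_set s = strand_set s') \<and>
     (\<forall>i j i' j'. f ` cell i j = cell i' j' \<longrightarrow>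
        f ` strand_set (top_strand D i j) =
          strand_set (if rv then bottom_strand D i' j' else top_strand D i' j'))"

definition G1 :: "(int \<Rightarrow> int \<Rightarrow> bool) \<Rightarrow> (pt \<Rightarrow> pt) set" where
  "G1 D = {f. \<exists>rv. is_sym D f rv}"

definition isonemal :: "(int \<Rightarrow> int \<Rightarrow> bool) \<Rightarrow> bool" where
  "isonemal D \<longleftrightarrow> (\<forall>s s'. \<exists>f rv. is_sym D f rv \<and> f ` strand_set s = strand_set s')"

definition transl :: "(int \<Rightarrow> int \<Rightarrow> bool) \<Rightarrow> pt set" where
  "transl D = {v. (\<lambda>p. p + v) \<in> G1 D}"

definition periodic :: "(int \<Rightarrow> int \<Rightarrow> bool) \<Rightarrow> bool" where
  "periodic D \<longleftrightarrow> (\<exists>v w. v \<in> transl D \<and> w \<in> transl D \<and>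
                      fst v * snd w - snd v * fst w \<noteq> 0)"

definition lin :: "(pt \<Rightarrow> pt) \<Rightarrow> pt \<Rightarrow> pt" where
  "lin f = (\<lambda>p. f p - f 0)"

definition sw :: "pt \<Rightarrow> pt" where
  "sw p = (snd p, fst p)"

text \<open>Point group of G is D2 = {1, -1, R, -R} with R the reflection in the line y = x,
  i.e. all reflection and glide-reflection axes are at 45 degrees to the strands.\<close>
definition pointgroup_D2_diag :: "(pt \<Rightarrow> pt) set \<Rightarrow> bool" where
  "pointgroup_D2_diag G \<longleftrightarrow> lin ` G = {id, (\<lambda>p. - p), sw, (\<lambda>p. - sw p)}"

definition has_mirror :: "(pt \<Rightarrow> pt) set \<Rightarrow> (pt \<Rightarrow> pt) \<Rightarrow> bool" where
  "has_mirror G L \<longleftrightarrow> (\<exists>f\<in>G. lin f = L \<and> (\<exists>p. f p = p))"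

text \<open>Crystallographic types: point group D2 (here with axes at 45 degrees);
  pgg has no mirrors, pmg has mirrors in exactly one of the two perpendicular directions
  (pmm and cmm have mirrors in both).\<close>
definition type_pgg_45 :: "(pt \<Rightarrow> pt) set \<Rightarrow> bool" where
  "type_pgg_45 G \<longleftrightarrow> pointgroup_D2_diag G \<and>
     \<not> has_mirror G sw \<and> \<not> has_mirror G (\<lambda>p. - sw p)"

definition type_pmg_45 :: "(pt \<Rightarrow> pt) set \<Rightarrow> bool" where
  "type_pmg_45 G \<longleftrightarrow> pointgroup_D2_diag G \<and>
     (has_mirror G sw \<noteq> has_mirror G (\<lambda>p. - sw p))"

definition half_turn_centre :: "(int \<Rightarrow> int \<Rightarrow> bool) \<Rightarrow> pt \<Rightarrow> bool" where
  "half_turn_centre D q \<longleftrightarrow> (\<lambda>p. 2 *\<^sub>R q - p) \<in> G1 D"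

definition rect_lattice_unit :: "(int \<Rightarrow> int \<Rightarrow> bool) \<Rightarrow> pt \<Rightarrow> pt \<Rightarrow> pt \<Rightarrow> bool" where
  "rect_lattice_unit D c v w \<longleftrightarrow>
     transl D = {of_int m *\<^sub>R v + of_int n *\<^sub>R w | m n. True} \<and>
     fst v * snd w - snd v * fst w \<noteq> 0 \<and>
     fst v * fst w + snd v * snd w = 0"

definition cell_corner :: "pt \<Rightarrow> bool" where
  "cell_corner q \<longleftrightarrow> fst q \<in> \<int> \<and> snd q \<in> \<int>"

definition cell_centre :: "pt \<Rightarrow> bool" where
  "cell_centre q \<longleftrightarrow> fst q - 1/2 \<in> \<int> \<and> snd q - 1/2 \<in> \<int>"

definition boundary_not_corner :: "pt \<Rightarrow> bool" where
  "boundary_not_corner q \<longleftrightarrow> (fst q \<in> \<int> \<or> snd q \<in> \<int>) \<and> \<not> cell_corner q"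

definition nine_points :: "pt \<Rightarrow> pt \<Rightarrow> pt \<Rightarrow> pt set" where
  "nine_points c v w = {c + (real a / 2) *\<^sub>R v + (real b / 2) *\<^sub>R w | a b. a \<in> {0,1,2::nat} \<and> b \<in> {0,1,2::nat}}"

end

theory Submission imports Defs begin

definition amap :: "real \<Rightarrow> bool \<Rightarrow> pt \<Rightarrow> pt \<Rightarrow> pt" where
  "amap s b u p = (if b then (s * snd p + fst u, s * fst p + snd u)
                   else (s * fst p + fst u, s * snd p + snd u))"

lemma int_eq_half:
  fixes a b :: int
  assumes "of_int b \<le> (of_int a::real) + 1/2" "(of_int a::real) + 1/2 \<le> of_int b + 1"
  shows "a = b"
proof -
  have "(of_int b::real) < of_int (a+1)" using assms(1) by simp
  hence "b < a + 1" by (simp only: of_int_less_iff)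
  moreover have "(of_int a::real) < of_int (b+1)" using assms(2) by simp
  hence "a < b + 1" by (simp only: of_int_less_iff)
  ultimately show ?thesis by linarith
qed

lemma strand_inj: "strand_set s = strand_set s' \<Longrightarrow> s = s'"
proof (cases s; cases s')
  fix a b assume h: "strand_set s = strand_set s'" "s = Warp a" "s' = Warp b"
  have "(of_int a + 1/2, 0) \<in> strand_set s" using h(2) by simp
  hence "(of_int a + 1/2, 0) \<in> strand_set s'" using h(1) by simp
  hence "of_int b \<le> (of_int a::real) + 1/2" "(of_int a::real) + 1/2 \<le> of_int b + 1" using h(3) by auto
  thus ?thesis using h(2,3) int_eq_half[of b a] by simp
next
  fix a b assume h: "strand_set s = strand_set s'" "s = Weft a" "s' = Weft b"
  have "(0, of_int a + 1/2) \<in> strand_set s" using h(2) by simp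
  hence "(0, of_int a + 1/2) \<in> strand_set s'" using h(1) by simp
  hence "of_int b \<le> (of_int a::real) + 1/2" "(of_int a::real) + 1/2 \<le> of_int b + 1" using h(3) by auto
  thus ?thesis using h(2,3) int_eq_half[of b a] by simp
next
  fix a b assume h: "strand_set s = strand_set s'" "s = Warp a" "s' = Weft b"
  have "(of_int a, of_int b + 2) \<in> strand_set s" using h(2) by simp
  hence "(of_int a, of_int b + 2) \<in> strand_set s'" using h(1) by simp
  thus ?thesis using h(3) by simp
next
  fix a b assume h: "strand_set s = strand_set s'" "s = Weft a" "s' = Warp b"
  have "(of_int b + 2, of_int a) \<in> strand_set s" using h(2) by simp
  hence "(of_int b + 2, of_int a) \<in> strand_set s'" using h(1) by simp
  thus ?thesis using h(3) by simp
qed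

lemma cell_inj: "cell a b = cell i j \<Longrightarrow> a = i \<and> b = j"
proof -
  assume h: "cell a b = cell i j"
  have "(of_int a + 1/2, of_int b + 1/2) \<in> cell a b" by (simp add: cell_def)
  hence "(of_int a + 1/2, of_int b + 1/2) \<in> cell i j" using h by simp
  thus ?thesis using int_eq_half[of i a] int_eq_half[of j b] by (auto simp: cell_def)
qed

lemma strand_inter:
  assumes "strand_set s1 \<inter> strand_set s2 = cell i j"
  shows "(s1 = Warp i \<and> s2 = Weft j) \<or> (s1 = Weft j \<and> s2 = Warp i)"
proof (cases s1; cases s2)
  fix a b assume h: "s1 = Warp a" "s2 = Warp b"
  have "(of_int i, of_int j) \<in> cell i j" by (simp add: cell_def)
  hence "(of_int i, of_int j) \<in> strand_set s1 \<inter> strand_set s2" by (metis assms)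
  hence "(of_int i, of_int j + 2) \<in> strand_set s1 \<inter> strand_set s2" using h by simp
  hence "(of_int i, of_int j + 2) \<in> cell i j" by (metis assms)
  thus ?thesis by (simp add: cell_def)
next
  fix a b assume h: "s1 = Weft a" "s2 = Weft b"
  have "(of_int i, of_int j) \<in> cell i j" by (simp add: cell_def)
  hence "(of_int i, of_int j) \<in> strand_set s1 \<inter> strand_set s2" by (metis assms)
  hence "(of_int i + 2, of_int j) \<in> strand_set s1 \<inter> strand_set s2" using h by simp
  hence "(of_int i + 2, of_int j) \<in> cell i j" by (metis assms)
  thus ?thesis by (simp add: cell_def)
next
  fix a b assume h: "s1 = Warp a" "s2 = Weft b"
  hence "cell a b = cell i j" using assms by (simp add: cell_def)
  thus ?thesis using h cell_inj by blast
next
  fix a b assume h: "s1 = Weft a" "s2 = Warp b"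
  hence "cell b a = cell i j" using assms by (simp add: cell_def Int_commute)
  thus ?thesis using h cell_inj by blast
qed

lemma isometry_inj: "isometry f \<Longrightarrow> inj f"
  unfolding isometry_def inj_def by (metis dist_eq_0_iff)

lemma top_ne_bottom: "top_strand D i j \<noteq> bottom_strand D i j"
  by (auto simp: top_strand_def bottom_strand_def)

lemma key:
  assumes "isometry f" "\<forall>s. \<exists>s'. f ` strand_set s = strand_set s'"
    "f ` cell k l = cell i j"
    "f ` strand_set (top_strand D k l) = strand_set T"
  shows "(T = top_strand D i j \<and> f ` strand_set (bottom_strand D k l) = strand_set (bottom_strand D i j))
       \<or> (T = bottom_strand D i j \<and> f ` strand_set (bottom_strand D k l) = strand_set (top_strand D i j))"
proof -
  obtain s1 where s1: "f ` strand_set (Warp k) = strand_set s1" using assms(2) by blast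
  obtain s2 where s2: "f ` strand_set (Weft l) = strand_set s2" using assms(2) by blast
  have "f ` cell k l = strand_set s1 \<inter> strand_set s2"
    unfolding cell_def using image_Int[OF isometry_inj[OF assms(1)]] s1 s2 by simp
  hence "(s1 = Warp i \<and> s2 = Weft j) \<or> (s1 = Weft j \<and> s2 = Warp i)"
    using strand_inter assms(3) by simp
  thus ?thesis using assms(4) s1 s2
    by (auto simp: top_strand_def bottom_strand_def split: if_splits dest: strand_inj)
qed

lemma sym_comp:
  assumes f: "is_sym D f r1" and g: "is_sym D g r2"
    and gc: "\<And>i j. \<exists>i' j'. g ` cell i j = cell i' j'"
  shows "is_sym D (f \<circ> g) (r1 \<noteq> r2)"
  unfolding is_sym_def
proof (intro conjI allI impI)
  show "isometry (f \<circ> g)" using f g unfolding is_sym_def isometry_def comp_def by metis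
  fix s show "\<exists>s'. (f \<circ> g) ` strand_set s = strand_set s'"
    using f g unfolding is_sym_def image_comp[symmetric] by metis
next
  fix i j i' j' assume h: "(f \<circ> g) ` cell i j = cell i' j'"
  obtain k l where kl: "g ` cell i j = cell k l" using gc by blast
  have "f ` (g ` cell i j) = cell i' j'" using h by (simp add: image_comp)
  hence fkl: "f ` cell k l = cell i' j'" using kl by simp
  have g1: "g ` strand_set (top_strand D i j) = strand_set (if r2 then bottom_strand D k l else top_strand D k l)"
    using g kl unfolding is_sym_def by blast
  have f1: "f ` strand_set (top_strand D k l) = strand_set (if r1 then bottom_strand D i' j' else top_strand D i' j')"
    using f fkl unfolding is_sym_def by blast
  have f2: "f ` strand_set (bottom_strand D k l) = strand_set (if r1 then top_strand D i' j' else bottom_strand D i' j')"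
    using key[OF _ _ fkl f1] f top_ne_bottom[of D i' j'] unfolding is_sym_def by (cases r1) auto
  show "(f \<circ> g) ` strand_set (top_strand D i j) = strand_set (if r1 \<noteq> r2 then bottom_strand D i' j' else top_strand D i' j')"
    unfolding image_comp[symmetric] using g1 f1 f2 by (cases r1; cases r2) simp_all
qed

lemma vert_int:
  assumes "\<And>y. (a, y) \<in> strand_set s" "\<And>y. (a', y) \<in> strand_set s" "a' = a + 1 \<or> a' = a - 1"
  shows "a \<in> \<int>"
proof (cases s)
  case (Warp k)
  then have "of_int k \<le> a" "a \<le> of_int k + 1" "of_int k \<le> a'" "a' \<le> of_int k + 1"
    using assms(1,2)[of 0] by auto
  with assms(3) have "a = of_int k \<or> a = of_int (k + 1)" by auto
  then show ?thesis by (metis Ints_of_int)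
next
  case (Weft j)
  then show ?thesis using assms(1)[of "of_int j + 2"] by auto
qed

lemma horiz_int:
  assumes "\<And>x. (x, a) \<in> strand_set s" "\<And>x. (x, a') \<in> strand_set s" "a' = a + 1 \<or> a' = a - 1"
  shows "a \<in> \<int>"
proof (cases s)
  case (Weft k)
  then have "of_int k \<le> a" "a \<le> of_int k + 1" "of_int k \<le> a'" "a' \<le> of_int k + 1"
    using assms(1,2)[of 0] by auto
  with assms(3) have "a = of_int k \<or> a = of_int (k + 1)" by auto
  then show ?thesis by (metis Ints_of_int)
next
  case (Warp j)
  then show ?thesis using assms(1)[of "of_int j + 2"] by auto
qed

lemma image_inv: "(\<And>p. g (f p) = p) \<Longrightarrow> (\<And>p. f (g p) = p) \<Longrightarrow> f ` S = {p. g p \<in> S}"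
  by (auto, metis image_eqI)

lemma amap_int:
  assumes ss: "s = 1 \<or> s = -1" and st: "\<forall>t. \<exists>t'. amap s b u ` strand_set t = strand_set t'"
  shows "fst u \<in> \<int> \<and> snd u \<in> \<int>"
proof -
  have s2: "s * s = 1" using ss by auto
  obtain t1 where t1: "amap s b u ` strand_set (Warp 0) = strand_set t1" using st by blast
  obtain t2 where t2: "amap s b u ` strand_set (Weft 0) = strand_set t2" using st by blast
  show ?thesis
  proof (cases b)
    case False
    have "fst u \<in> \<int>"
    proof (rule vert_int[of _ t1 "s + fst u"])
      fix y
      have "(fst u, y) = amap s b u (0, s * (y - snd u))" using False s2
        by (simp add: amap_def algebra_simps mult.assoc[symmetric])
      thus "(fst u, y) \<in> strand_set t1" using t1[symmetric] by (auto intro!: image_eqI)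
      have "(s + fst u, y) = amap s b u (1, s * (y - snd u))" using False s2
        by (simp add: amap_def algebra_simps mult.assoc[symmetric])
      thus "(s + fst u, y) \<in> strand_set t1" using t1[symmetric] by (auto intro!: image_eqI)
    next
      show "s + fst u = fst u + 1 \<or> s + fst u = fst u - 1" using ss by auto
    qed
    moreover have "snd u \<in> \<int>"
    proof (rule horiz_int[of _ t2 "s + snd u"])
      fix x
      have "(x, snd u) = amap s b u (s * (x - fst u), 0)" using False s2
        by (simp add: amap_def algebra_simps mult.assoc[symmetric])
      thus "(x, snd u) \<in> strand_set t2" using t2[symmetric] by (auto intro!: image_eqI)
      have "(x, s + snd u) = amap s b u (s * (x - fst u), 1)" using False s2
        by (simp add: amap_def algebra_simps mult.assoc[symmetric])
      thus "(x, s + snd u) \<in> strand_set t2" using t2[symmetric] by (auto intro!: image_eqI)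
    next
      show "s + snd u = snd u + 1 \<or> s + snd u = snd u - 1" using ss by auto
    qed
    ultimately show ?thesis by blast
  next
    case True
    have "fst u \<in> \<int>"
    proof (rule vert_int[of _ t2 "s + fst u"])
      fix y
      have "(fst u, y) = amap s b u (s * (y - snd u), 0)" using True s2
        by (simp add: amap_def algebra_simps mult.assoc[symmetric])
      thus "(fst u, y) \<in> strand_set t2" using t2[symmetric] by (auto intro!: image_eqI)
      have "(s + fst u, y) = amap s b u (s * (y - snd u), 1)" using True s2
        by (simp add: amap_def algebra_simps mult.assoc[symmetric])
      thus "(s + fst u, y) \<in> strand_set t2" using t2[symmetric] by (auto intro!: image_eqI)
    next
      show "s + fst u = fst u + 1 \<or> s + fst u = fst u - 1" using ss by auto
    qed
    moreover have "snd u \<in> \<int>"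
    proof (rule horiz_int[of _ t1 "s + snd u"])
      fix x
      have "(x, snd u) = amap s b u (0, s * (x - fst u))" using True s2
        by (simp add: amap_def algebra_simps mult.assoc[symmetric])
      thus "(x, snd u) \<in> strand_set t1" using t1[symmetric] by (auto intro!: image_eqI)
      have "(x, s + snd u) = amap s b u (1, s * (x - fst u))" using True s2
        by (simp add: amap_def algebra_simps mult.assoc[symmetric])
      thus "(x, s + snd u) \<in> strand_set t1" using t1[symmetric] by (auto intro!: image_eqI)
    next
      show "s + snd u = snd u + 1 \<or> s + snd u = snd u - 1" using ss by auto
    qed
    ultimately show ?thesis by blast
  qed
qed

lemma amap_cell:
  assumes ss: "s = 1 \<or> s = -1" and "fst u \<in> \<int>" "snd u \<in> \<int>"
  shows "\<exists>i' j'. amap s b u ` cell i j = cell i' j'"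
proof -
  obtain m where m: "fst u = of_int m" using assms(2) Ints_cases by metis
  obtain n where n: "snd u = of_int n" using assms(3) Ints_cases by metis
  consider "s = 1" "\<not> b" | "s = -1" "\<not> b" | "s = 1" "b" | "s = -1" "b" using ss by blast
  thus ?thesis
  proof cases
    case 1
    have "amap s b u ` cell i j = {p. (fst p - fst u, snd p - snd u) \<in> cell i j}"
      by (rule image_inv) (use 1 in \<open>auto simp: amap_def\<close>)
    also have "\<dots> = cell (i + m) (j + n)" using m n by (auto simp: cell_def)
    finally show ?thesis by blast
  next
    case 2
    have "amap s b u ` cell i j = {p. (fst u - fst p, snd u - snd p) \<in> cell i j}"
      by (rule image_inv) (use 2 in \<open>auto simp: amap_def\<close>)
    also have "\<dots> = cell (m - i - 1) (n - j - 1)" using m n by (auto simp: cell_def)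
    finally show ?thesis by blast
  next
    case 3
    have "amap s b u ` cell i j = {p. (snd p - snd u, fst p - fst u) \<in> cell i j}"
      by (rule image_inv) (use 3 in \<open>auto simp: amap_def\<close>)
    also have "\<dots> = cell (j + m) (i + n)" using m n by (auto simp: cell_def)
    finally show ?thesis by blast
  next
    case 4
    have "amap s b u ` cell i j = {p. (snd u - snd p, fst u - fst p) \<in> cell i j}"
      by (rule image_inv) (use 4 in \<open>auto simp: amap_def\<close>)
    also have "\<dots> = cell (m - j - 1) (n - i - 1)" using m n by (auto simp: cell_def)
    finally show ?thesis by blast
  qed
qed

lemma G1_comp:
  assumes "f \<in> G1 D" "amap s b u \<in> G1 D" "s = 1 \<or> s = -1"
  shows "f \<circ> amap s b u \<in> G1 D"
proof -
  obtain r1 where r1: "is_sym D f r1" using assms(1) by (auto simp: G1_def)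
  obtain r2 where r2: "is_sym D (amap s b u) r2" using assms(2) by (auto simp: G1_def)
  have "\<forall>t. \<exists>t'. amap s b u ` strand_set t = strand_set t'" using r2 unfolding is_sym_def by blast
  from amap_int[OF assms(3) this] have "fst u \<in> \<int> \<and> snd u \<in> \<int>" .
  hence "\<And>i j. \<exists>i' j'. amap s b u ` cell i j = cell i' j'" using amap_cell[OF assms(3)] by blast
  from sym_comp[OF r1 r2 this] show ?thesis by (auto simp: G1_def)
qed

lemma G1_int:
  assumes "amap s b u \<in> G1 D" "s = 1 \<or> s = -1"
  shows "fst u \<in> \<int> \<and> snd u \<in> \<int>"
proof -
  obtain r2 where r2: "is_sym D (amap s b u) r2" using assms(1) by (auto simp: G1_def)
  have "\<forall>t. \<exists>t'. amap s b u ` strand_set t = strand_set t'" using r2 unfolding is_sym_def by blast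
  from amap_int[OF assms(2) this] show ?thesis .
qed

lemma transl_amap: "(\<lambda>p. p + t) = amap 1 False t"
  by (auto simp: amap_def fun_eq_iff prod_eq_iff)

lemma half_amap: "(\<lambda>p. 2 *\<^sub>R q - p) = amap (-1) False (2 *\<^sub>R q)"
  by (auto simp: amap_def fun_eq_iff prod_eq_iff)

lemma P1:
  assumes "half_turn_centre D q" "(\<lambda>p. p + t) \<in> G1 D"
  shows "half_turn_centre D (q + (1/2) *\<^sub>R t)"
proof -
  have "(\<lambda>p. p + t) \<circ> amap (-1) False (2 *\<^sub>R q) \<in> G1 D"
    using G1_comp[OF assms(2)] assms(1) by (simp add: half_turn_centre_def half_amap)
  moreover have "(\<lambda>p. p + t) \<circ> amap (-1) False (2 *\<^sub>R q) = (\<lambda>p. 2 *\<^sub>R (q + (1/2) *\<^sub>R t) - p)"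
    by (auto simp: amap_def fun_eq_iff prod_eq_iff)
  ultimately show ?thesis by (simp add: half_turn_centre_def)
qed

lemma lin_form:
  assumes "lin g = L" shows "g = (\<lambda>p. L p + g 0)"
proof (rule ext)
  fix p
  have "(\<lambda>p. g p - g 0) p = L p" using fun_cong[OF assms[unfolded lin_def], of p] .
  hence "g p - g 0 = L p" by simp
  thus "g p = L p + g 0" by (simp add: algebra_simps)
qed

lemma parity_arg:
  fixes A B S m0 n0 :: int
  assumes "2*S = m0*A + n0*B" "\<forall>m n. m*A + n*B \<noteq> -S"
  shows "even A \<and> even B"
proof (rule ccontr)
  assume "\<not> (even A \<and> even B)"
  then consider "odd A" | "odd B" by blast
  thus False
  proof cases
    case 1
    then obtain a where a: "A = 2*a + 1" by (metis oddE)
    have "(a*m0 - S)*A + (a*n0)*B = -S" using assms(1) unfolding a by algebra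
    thus False using assms(2) by blast
  next
    case 2
    then obtain a where a: "B = 2*a + 1" by (metis oddE)
    have "(a*m0)*A + (a*n0 - S)*B = -S" using assms(1) unfolding a by algebra
    thus False using assms(2) by blast
  qed
qed

lemma mirror_sw:
  assumes "g \<in> G1 D" "lin g = sw" "\<not> has_mirror (G1 D) sw"
  shows "\<exists>S::int. (of_int S, of_int S) \<in> transl D \<and> (\<forall>t\<in>transl D. fst t + snd t \<noteq> - of_int S)"
proof -
  define u where "u = g 0"
  have gp: "g p = sw p + u" for p using fun_cong[OF lin_form[OF assms(2)], of p] by (simp add: u_def)
  have g: "g = amap 1 True u"
    by (rule ext) (simp add: gp amap_def sw_def prod_eq_iff)
  have gi: "amap 1 True u \<in> G1 D" using assms(1) g by simp
  obtain S where S: "fst u + snd u = of_int S" using G1_int[OF gi] by (metis Ints_add Ints_cases)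
  have "amap 1 True u \<circ> amap 1 True u \<in> G1 D" using G1_comp[OF gi gi] by simp
  moreover have "amap 1 True u \<circ> amap 1 True u = (\<lambda>p. p + (of_int S, of_int S))"
    using S by (auto simp: amap_def fun_eq_iff)
  ultimately have "(of_int S, of_int S) \<in> transl D" by (simp add: transl_def)
  moreover have "fst t + snd t \<noteq> - of_int S" if t: "t \<in> transl D" for t
  proof
    assume e: "fst t + snd t = - of_int S"
    have ti: "amap 1 False t \<in> G1 D" using t by (simp add: transl_def transl_amap)
    have "g \<circ> amap 1 False t \<in> G1 D" using G1_comp[OF assms(1) ti] by simp
    moreover have "lin (g \<circ> amap 1 False t) = sw"
      by (auto simp: g lin_def amap_def sw_def fun_eq_iff)
    moreover have "(g \<circ> amap 1 False t) (snd t + fst u, 0) = (snd t + fst u, 0)"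
      using e S by (auto simp: g amap_def)
    ultimately have "has_mirror (G1 D) sw" unfolding has_mirror_def by blast
    thus False using assms(3) by blast
  qed
  ultimately show ?thesis by blast
qed

lemma mirror_nsw:
  assumes "g \<in> G1 D" "lin g = (\<lambda>p. - sw p)" "\<not> has_mirror (G1 D) (\<lambda>p. - sw p)"
  shows "\<exists>S::int. (of_int S, - of_int S) \<in> transl D \<and> (\<forall>t\<in>transl D. fst t - snd t \<noteq> - of_int S)"
proof -
  define u where "u = g 0"
  have gp: "g p = - sw p + u" for p using fun_cong[OF lin_form[OF assms(2)], of p] by (simp add: u_def)
  have g: "g = amap (-1) True u"
    by (rule ext) (simp add: gp amap_def sw_def prod_eq_iff)
  have gi: "amap (-1) True u \<in> G1 D" using assms(1) g by simp
  obtain S where S: "fst u - snd u = of_int S" using G1_int[OF gi] by (metis Ints_diff Ints_cases)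
  have "amap (-1) True u \<circ> amap (-1) True u \<in> G1 D" using G1_comp[OF gi gi] by simp
  moreover have "amap (-1) True u \<circ> amap (-1) True u = (\<lambda>p. p + (of_int S, - of_int S))"
    using S by (auto simp: amap_def fun_eq_iff)
  ultimately have "(of_int S, - of_int S) \<in> transl D" by (simp add: transl_def)
  moreover have "fst t - snd t \<noteq> - of_int S" if t: "t \<in> transl D" for t
  proof
    assume e: "fst t - snd t = - of_int S"
    have ti: "amap 1 False t \<in> G1 D" using t by (simp add: transl_def transl_amap)
    have "g \<circ> amap 1 False t \<in> G1 D" using G1_comp[OF assms(1) ti] by simp
    moreover have "lin (g \<circ> amap 1 False t) = (\<lambda>p. - sw p)"
      by (auto simp: g lin_def amap_def sw_def fun_eq_iff)
    moreover have "(g \<circ> amap 1 False t) (fst u - snd t, 0) = (fst u - snd t, 0)"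
      using e S by (auto simp: g amap_def)
    ultimately have "has_mirror (G1 D) (\<lambda>p. - sw p)" unfolding has_mirror_def by blast
    thus False using assms(3) by blast
  qed
  ultimately show ?thesis by blast
qed

lemma h1: "(of_int X :: real) / 2 \<in> \<int> \<Longrightarrow> even X"
proof -
  assume "(of_int X :: real) / 2 \<in> \<int>"
  then obtain k where h: "(of_int X :: real) / 2 = of_int k" by (rule Ints_cases)
  have "(of_int X :: real) = of_int (2*k)" using h by simp
  hence "X = 2*k" by (simp only: of_int_eq_iff)
  thus "even X" by simp
qed
lemma h2: "even X \<Longrightarrow> (of_int X :: real) / 2 \<in> \<int>"
proof -
  assume "even X"
  then obtain k where "X = 2*k" by (rule evenE)
  hence "(of_int X :: real) / 2 = of_int k" by simp
  thus "(of_int X :: real) / 2 \<in> \<int>" by (metis Ints_of_int)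
qed
lemma half_int: "((of_int X :: real) / 2 \<in> \<int>) \<longleftrightarrow> even X"
  using h1 h2 by blast

lemma half_int2: "((of_int X :: real) / 2 - 1/2 \<in> \<int>) \<longleftrightarrow> odd X"
proof -
  have e: "(of_int X :: real) / 2 - 1/2 = of_int (X - 1) / 2" by (simp add: field_simps)
  show ?thesis unfolding e half_int by simp
qed

lemma CLS:
  fixes X Y :: int
  assumes "fst q = of_int X / 2" "snd q = of_int Y / 2"
  shows "(cell_corner q \<or> cell_centre q \<longleftrightarrow> even (X + Y)) \<and> (boundary_not_corner q \<longleftrightarrow> odd (X + Y))"
proof -
  have a: "cell_corner q \<longleftrightarrow> even X \<and> even Y" unfolding cell_corner_def assms half_int ..
  have b: "cell_centre q \<longleftrightarrow> odd X \<and> odd Y" unfolding cell_centre_def assms half_int2 ..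
  have c: "boundary_not_corner q \<longleftrightarrow> (even X \<or> even Y) \<and> \<not> (even X \<and> even Y)"
    unfolding boundary_not_corner_def a unfolding assms half_int ..
  show ?thesis unfolding a b c by auto
qed
theorem lemma1:
  fixes D :: "int \<Rightarrow> int \<Rightarrow> bool" and c v w :: pt
  assumes "periodic D"
    and "isonemal D"
    and "type_pgg_45 (G1 D) \<or> type_pmg_45 (G1 D)"
    and "rect_lattice_unit D c v w"
    and "half_turn_centre D c" and "half_turn_centre D (c + v)"
    and "half_turn_centre D (c + w)" and "half_turn_centre D (c + v + w)"
  shows "(\<forall>q\<in>nine_points c v w. half_turn_centre D q) \<and>
         ((\<forall>q\<in>nine_points c v w. cell_corner q \<or> cell_centre q) \<or>
          (\<forall>q\<in>nine_points c v w. boundary_not_corner q))"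
proof -
  have pg: "pointgroup_D2_diag (G1 D)"
    and nm: "\<not> has_mirror (G1 D) sw \<or> \<not> has_mirror (G1 D) (\<lambda>p. - sw p)"
    using assms(3) unfolding type_pgg_45_def type_pmg_45_def by auto
  have TL: "transl D = {of_int m *\<^sub>R v + of_int n *\<^sub>R w | m n. True}"
    using assms(4) by (simp add: rect_lattice_unit_def)
  have "v = of_int 1 *\<^sub>R v + of_int 0 *\<^sub>R w" by simp
  hence vT: "v \<in> transl D" unfolding TL by blast
  have "w = of_int 0 *\<^sub>R v + of_int 1 *\<^sub>R w" by simp
  hence wT: "w \<in> transl D" unfolding TL by blast
  have vG: "(\<lambda>p. p + v) \<in> G1 D" using vT by (simp add: transl_def)
  have wG: "(\<lambda>p. p + w) \<in> G1 D" using wT by (simp add: transl_def)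
  have "fst v \<in> \<int> \<and> snd v \<in> \<int>" using G1_int[of 1 False v D] vG by (simp add: transl_amap)
  then have "fst v \<in> \<int>" "snd v \<in> \<int>" by auto
  then obtain V1 V2 where "fst v = of_int V1" "snd v = of_int V2" by (metis Ints_cases)
  hence V: "v = (of_int V1, of_int V2)" by (simp add: prod_eq_iff)
  have "fst w \<in> \<int> \<and> snd w \<in> \<int>" using G1_int[of 1 False w D] wG by (simp add: transl_amap)
  then have "fst w \<in> \<int>" "snd w \<in> \<int>" by auto
  then obtain W1 W2 where "fst w = of_int W1" "snd w = of_int W2" by (metis Ints_cases)
  hence W: "w = (of_int W1, of_int W2)" by (simp add: prod_eq_iff)
  have "fst (2 *\<^sub>R c) \<in> \<int> \<and> snd (2 *\<^sub>R c) \<in> \<int>"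
    using G1_int[of "-1" False "2 *\<^sub>R c" D] assms(5) by (simp add: half_turn_centre_def half_amap)
  hence "2 * fst c \<in> \<int>" "2 * snd c \<in> \<int>" by auto
  then obtain C1 C2 where C: "2 * fst c = of_int C1" "2 * snd c = of_int C2" by (metis Ints_cases)
  have PG: "lin ` G1 D = {id, (\<lambda>p. - p), sw, (\<lambda>p. - sw p)}" using pg unfolding pointgroup_D2_diag_def .
  have ev: "even (V1 + V2) \<and> even (W1 + W2)"
  proof -
    from nm consider "\<not> has_mirror (G1 D) sw" | "\<not> has_mirror (G1 D) (\<lambda>p. - sw p)" by blast
    thus ?thesis
    proof cases
      case 1
      have "sw \<in> lin ` G1 D" unfolding PG by (rule insertI2, rule insertI2, rule insertI1)
      then obtain g where g: "g \<in> G1 D" "sw = lin g" by (rule imageE)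
      obtain S where S: "(of_int S, of_int S) \<in> transl D" "\<forall>t\<in>transl D. fst t + snd t \<noteq> - of_int S"
        using mirror_sw[OF g(1) g(2)[symmetric] 1] by blast
      from S(1) obtain m0 n0 where "(of_int S, of_int S) = of_int m0 *\<^sub>R v + of_int n0 *\<^sub>R w" unfolding TL by blast
      hence "(of_int S :: real) = of_int (m0 * V1 + n0 * W1)" "(of_int S :: real) = of_int (m0 * V2 + n0 * W2)"
        by (simp_all add: V W prod_eq_iff)
      hence "S = m0 * V1 + n0 * W1" "S = m0 * V2 + n0 * W2" by (simp_all only: of_int_eq_iff)
      hence e1: "2*S = m0*(V1+V2) + n0*(W1+W2)" by algebra
      have e2: "\<forall>m n. m*(V1+V2) + n*(W1+W2) \<noteq> -S"
      proof (intro allI notI)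
        fix m n assume "m*(V1+V2) + n*(W1+W2) = -S"
        hence e: "(of_int (m*(V1+V2) + n*(W1+W2)) :: real) = - of_int S" by simp
        have "of_int m *\<^sub>R v + of_int n *\<^sub>R w \<in> transl D" unfolding TL by blast
        hence ne: "fst (of_int m *\<^sub>R v + of_int n *\<^sub>R w) + snd (of_int m *\<^sub>R v + of_int n *\<^sub>R w) \<noteq> - of_int S"
          using S(2) by blast
        have "fst (of_int m *\<^sub>R v + of_int n *\<^sub>R w) + snd (of_int m *\<^sub>R v + of_int n *\<^sub>R w)
              = (of_int (m*(V1+V2) + n*(W1+W2)) :: real)" by (simp add: V W algebra_simps)
        thus False using ne e by simp
      qed
      from parity_arg[OF e1 e2] show ?thesis by auto
    next
      case 2
      have "(\<lambda>p. - sw p) \<in> lin ` G1 D" unfolding PG by (rule insertI2, rule insertI2, rule insertI2, rule insertI1)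
      then obtain g where g: "g \<in> G1 D" "(\<lambda>p. - sw p) = lin g" by (rule imageE)
      obtain S where S: "(of_int S, - of_int S) \<in> transl D" "\<forall>t\<in>transl D. fst t - snd t \<noteq> - of_int S"
        using mirror_nsw[OF g(1) g(2)[symmetric] 2] by blast
      from S(1) obtain m0 n0 where "(of_int S, - of_int S) = of_int m0 *\<^sub>R v + of_int n0 *\<^sub>R w" unfolding TL by blast
      hence "(of_int S :: real) = of_int (m0 * V1 + n0 * W1)" "(of_int (-S) :: real) = of_int (m0 * V2 + n0 * W2)"
        by (simp_all add: V W prod_eq_iff)
      hence "S = m0 * V1 + n0 * W1" "-S = m0 * V2 + n0 * W2" by (simp_all only: of_int_eq_iff)
      hence e1: "2*S = m0*(V1-V2) + n0*(W1-W2)" by algebra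
      have e2: "\<forall>m n. m*(V1-V2) + n*(W1-W2) \<noteq> -S"
      proof (intro allI notI)
        fix m n assume "m*(V1-V2) + n*(W1-W2) = -S"
        hence e: "(of_int (m*(V1-V2) + n*(W1-W2)) :: real) = - of_int S" by simp
        have "of_int m *\<^sub>R v + of_int n *\<^sub>R w \<in> transl D" unfolding TL by blast
        hence ne: "fst (of_int m *\<^sub>R v + of_int n *\<^sub>R w) - snd (of_int m *\<^sub>R v + of_int n *\<^sub>R w) \<noteq> - of_int S"
          using S(2) by blast
        have "fst (of_int m *\<^sub>R v + of_int n *\<^sub>R w) - snd (of_int m *\<^sub>R v + of_int n *\<^sub>R w)
              = (of_int (m*(V1-V2) + n*(W1-W2)) :: real)" by (simp add: V W algebra_simps)
        thus False using ne e by simp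
      qed
      from parity_arg[OF e1 e2] show ?thesis by auto
    qed
  qed
  define hc where "hc x y \<longleftrightarrow> half_turn_centre D (c + x *\<^sub>R v + y *\<^sub>R w)" for x y
  have stepx: "hc (x + 1/2) y" if "hc x y" for x y
  proof -
    have "half_turn_centre D (c + x *\<^sub>R v + y *\<^sub>R w + (1/2) *\<^sub>R v)"
      using P1[OF that[unfolded hc_def] vG] .
    moreover have "c + x *\<^sub>R v + y *\<^sub>R w + (1/2) *\<^sub>R v = c + (x + 1/2) *\<^sub>R v + y *\<^sub>R w"
      by (simp add: scaleR_left_distrib algebra_simps)
    ultimately show ?thesis by (simp add: hc_def)
  qed
  have stepy: "hc x (y + 1/2)" if "hc x y" for x y
  proof -
    have "half_turn_centre D (c + x *\<^sub>R v + y *\<^sub>R w + (1/2) *\<^sub>R w)"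
      using P1[OF that[unfolded hc_def] wG] .
    moreover have "c + x *\<^sub>R v + y *\<^sub>R w + (1/2) *\<^sub>R w = c + x *\<^sub>R v + (y + 1/2) *\<^sub>R w"
      by (simp add: scaleR_left_distrib algebra_simps)
    ultimately show ?thesis by (simp add: hc_def)
  qed
  have h00: "hc 0 0" using assms(5) by (simp add: hc_def)
  have h10: "hc 1 0" using assms(6) by (simp add: hc_def)
  have h01: "hc 0 1" using assms(7) by (simp add: hc_def)
  have h11: "hc 1 1" using assms(8) by (simp add: hc_def)
  have h50: "hc (1/2) 0" using stepx[OF h00] by simp
  have h05: "hc 0 (1/2)" using stepy[OF h00] by simp
  have h55: "hc (1/2) (1/2)" using stepy[OF h50] by simp
  have h15: "hc 1 (1/2)" using stepy[OF h10] by simp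
  have h51: "hc (1/2) 1" using stepx[OF h01] by simp
  have part1: "\<forall>q\<in>nine_points c v w. half_turn_centre D q"
  proof
    fix q assume "q \<in> nine_points c v w"
    then obtain a b :: nat where ab: "a \<in> {0,1,2}" "b \<in> {0,1,2}"
      and q: "q = c + (real a / 2) *\<^sub>R v + (real b / 2) *\<^sub>R w"
      unfolding nine_points_def by blast
    have all: "\<forall>x\<in>{0,1/2,1::real}. \<forall>y\<in>{0,1/2,1::real}. hc x y"
      using h00 h10 h01 h11 h50 h05 h55 h15 h51 by simp
    have "real a / 2 \<in> {0,1/2,1::real}" "real b / 2 \<in> {0,1/2,1::real}" using ab by auto
    hence "hc (real a / 2) (real b / 2)" using all by blast
    thus "half_turn_centre D q" by (simp add: hc_def q)
  qed
  have cls: "(cell_corner q \<or> cell_centre q \<longleftrightarrow> even (C1 + C2)) \<and> (boundary_not_corner q \<longleftrightarrow> odd (C1 + C2))"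
    if qn: "q \<in> nine_points c v w" for q
  proof -
    obtain a b :: nat where q: "q = c + (real a / 2) *\<^sub>R v + (real b / 2) *\<^sub>R w"
      using qn unfolding nine_points_def by blast
    define X where "X = C1 + int a * V1 + int b * W1"
    define Y where "Y = C2 + int a * V2 + int b * W2"
    have fx: "fst q = of_int X / 2" using C(1) by (simp add: q V W X_def field_simps)
    have fy: "snd q = of_int Y / 2" using C(2) by (simp add: q V W Y_def field_simps)
    have "X + Y = (C1 + C2) + int a * (V1 + V2) + int b * (W1 + W2)" unfolding X_def Y_def by algebra
    hence "even (X + Y) \<longleftrightarrow> even (C1 + C2)" using ev by simp
    thus ?thesis using CLS[OF fx fy] by simp
  qed
  show ?thesis using part1 cls by blast
qed

end
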